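(* Let $r\in\mathbb{Z}_{\ge0}$. Every character $\chi$ of $T$ of true depth $r$ is of the form $\chi=(\phi\circ\mathrm{det})\otimes\chi'$, where $\phi$ is a character of $E^1$ and $\chi'$ is a character of $T$ of minimal depth $r$.
   Context: Let $F$ be a non-archimedean local field with odd residual characteristic, ring of integers $\mathcal{O}_F$, maximal ideal $\mathfrak{p}_F$. Fix a non-square $\epsilon\in\mathcal{O}_F^\times$, $E=F[\sqrt\epsilon]$ with ring of integers $\mathcal{O}_E$, maximal ideal $\mathfrak{p}_E$; $\overline{x}$ is Galois conjugation; $E^1=\{x\in E^\times: x\overline x=1\}$. $G=\{g\in\mathrm{GL}_2(E):\overline{g}^{\top}\mathrm{w}g=\mathrm{w}\}$, $\mathrm{w}=\begin{pmatrix}0&1\\1&0\end{pmatrix}$; $\det(G)\subseteq E^1$. $T=\{t(a)=\mathrm{diag}(a,\overline a^{-1}):a\in E^\times\}$, $T_0=\{t(a):a\in\mathcal{O}_E^\times\}$, $T_n=\{t(a):a\in1+\mathfrak{p}_E^n\}$ ($n\ge1$); $S=\{\mathrm{diag}(a,a^{-1}):a\in F^\times\}$, $S_0$ ($a\in\mathcal{O}_F^\times$), $S_n$ ($a\in1+\mathfrak{p}_F^n$). A character $\chi$ of $T$ has depth $r\in\mathbb{Z}_{\ge0}$ if $\chi|_{T_r}\neq\mathbbm{1}$ and $\chi|_{T_{r+1}}=\mathbbm{1}$; a character trivial on $T_0$ is also said to have depth $0$. The true depth of $\chi$ is the depth of $\chi|_S$ (defined analogously with $S_n$). $\chi$ has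 minimal depth $r$ if its depth and true depth both equal $r$. *)

theory Defs
  imports Complex_Main
begin

(* v is the normalized valuation on F^x; its value at 0 is irrelevant. *)
definition pF :: "('a::field \<Rightarrow> int) \<Rightarrow> int \<Rightarrow> 'a set" where
  "pF v k = {x. x = 0 \<or> k \<le> v x}"   (* p_F^k ; pF v 0 = O_F *)

definition nonarch_local_field :: "('a::field \<Rightarrow> int) \<Rightarrow> bool" where
  "nonarch_local_field v \<longleftrightarrow>
     (\<forall>x y. x \<noteq> 0 \<longrightarrow> y \<noteq> 0 \<longrightarrow> v (x * y) = v x + v y) \<and>
     (\<forall>x y. x \<noteq> 0 \<longrightarrow> y \<noteq> 0 \<longrightarrow> x + y \<noteq> 0 \<longrightarrow> min (v x) (v y) \<le> v (x + y)) \<and>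
     (\<exists>\<pi>. \<pi> \<noteq> 0 \<and> v \<pi> = 1) \<and>
     (\<exists>R. finite R \<and> R \<subseteq> pF v 0 \<and> (\<forall>x\<in>pF v 0. \<exists>r\<in>R. x - r \<in> pF v 1)) \<and>
     (\<forall>s::nat \<Rightarrow> 'a. (\<forall>k. \<exists>N. \<forall>m\<ge>N. \<forall>n\<ge>N. s m - s n \<in> pF v k) \<longrightarrow>
          (\<exists>L. \<forall>k. \<exists>N. \<forall>n\<ge>N. s n - L \<in> pF v k))"

(* odd residual characteristic: 2 is a unit of O_F *)
definition odd_residual_char :: "('a::field \<Rightarrow> int) \<Rightarrow> bool" where
  "odd_residual_char v \<longleftrightarrow> (2::'a) \<noteq> 0 \<and> v 2 = 0"

section \<open>E = F[sqrt eps], elements (x,y) standing for x + y sqrt eps\<close>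

definition emult :: "'a::field \<Rightarrow> 'a \<times> 'a \<Rightarrow> 'a \<times> 'a \<Rightarrow> 'a \<times> 'a" where
  "emult eps z w = (fst z * fst w + eps * snd z * snd w, fst z * snd w + snd z * fst w)"

definition econj :: "'a::field \<times> 'a \<Rightarrow> 'a \<times> 'a" where
  "econj z = (fst z, - snd z)"

definition enorm :: "'a::field \<Rightarrow> 'a \<times> 'a \<Rightarrow> 'a" where
  "enorm eps z = fst z * fst z - eps * snd z * snd z"

definition einv :: "'a::field \<Rightarrow> 'a \<times> 'a \<Rightarrow> 'a \<times> 'a" where
  "einv eps z = (fst z / enorm eps z, - snd z / enorm eps z)"

definition E1 :: "'a::field \<Rightarrow> ('a \<times> 'a) set" where
  "E1 eps = {z. enorm eps z = 1}"

(* p_E^k  (E/F unramified, O_E = O_F[sqrt eps]) *)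
definition pE :: "('a::field \<Rightarrow> int) \<Rightarrow> int \<Rightarrow> ('a \<times> 'a) set" where
  "pE v k = {z. fst z \<in> pF v k \<and> snd z \<in> pF v k}"

definition tdet :: "'a::field \<Rightarrow> 'a \<times> 'a \<Rightarrow> 'a \<times> 'a" where
  "tdet eps a = emult eps a (einv eps (econj a))"

section \<open>The filtrations T_n (via a |-> t(a)) and S_n (via a |-> diag(a,a^-1))\<close>

definition Tn :: "'a::field \<Rightarrow> ('a \<Rightarrow> int) \<Rightarrow> nat \<Rightarrow> ('a \<times> 'a) set" where
  "Tn eps v n = (if n = 0
     then {z. z \<in> pE v 0 \<and> z \<noteq> (0, 0) \<and> einv eps z \<in> pE v 0}
     else {z. (fst z - 1, snd z) \<in> pE v (int n)})"

definition Sn :: "('a::field \<Rightarrow> int) \<Rightarrow> nat \<Rightarrow> 'a set" where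
  "Sn v n = (if n = 0
     then {a. a \<in> pF v 0 \<and> a \<noteq> 0 \<and> inverse a \<in> pF v 0}
     else {a. a - 1 \<in> pF v (int n)})"

(* a (smooth) character of T, written as a function of a where t(a) \<in> T *)
definition char_T :: "'a::field \<Rightarrow> ('a \<Rightarrow> int) \<Rightarrow> ('a \<times> 'a \<Rightarrow> complex) \<Rightarrow> bool" where
  "char_T eps v chi \<longleftrightarrow>
     (\<forall>a b. a \<noteq> (0, 0) \<longrightarrow> b \<noteq> (0, 0) \<longrightarrow> chi (emult eps a b) = chi a * chi b) \<and>
     (\<forall>a. a \<noteq> (0, 0) \<longrightarrow> chi a \<noteq> 0) \<and>
     (\<exists>n\<ge>1. \<forall>a\<in>Tn eps v n. chi a = 1)"

definition char_E1 :: "'a::field \<Rightarrow> ('a \<Rightarrow> int) \<Rightarrow> ('a \<times> 'a \<Rightarrow> complex) \<Rightarrow> bool" where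
  "char_E1 eps v phi \<longleftrightarrow>
     (\<forall>a\<in>E1 eps. \<forall>b\<in>E1 eps. phi (emult eps a b) = phi a * phi b) \<and>
     (\<forall>a\<in>E1 eps. phi a \<noteq> 0) \<and>
     (\<exists>n\<ge>1. \<forall>a\<in>E1 eps \<inter> Tn eps v n. phi a = 1)"

definition has_depth :: "(nat \<Rightarrow> 'b set) \<Rightarrow> ('b \<Rightarrow> complex) \<Rightarrow> nat \<Rightarrow> bool" where
  "has_depth G f r \<longleftrightarrow>
     (\<forall>x\<in>G (Suc r). f x = 1) \<and>
     ((\<exists>x\<in>G r. f x \<noteq> 1) \<or> (r = 0 \<and> (\<forall>x\<in>G 0. f x = 1)))"

definition depth_T :: "'a::field \<Rightarrow> ('a \<Rightarrow> int) \<Rightarrow> ('a \<times> 'a \<Rightarrow> complex) \<Rightarrow> nat \<Rightarrow> bool" where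
  "depth_T eps v chi r \<longleftrightarrow> has_depth (Tn eps v) chi r"

(* true depth: depth of the restriction to S, diag(a,a^-1) = t(a) for a in F^x *)
definition true_depth :: "('a::field \<Rightarrow> int) \<Rightarrow> ('a \<times> 'a \<Rightarrow> complex) \<Rightarrow> nat \<Rightarrow> bool" where
  "true_depth v chi r \<longleftrightarrow> has_depth (Sn v) (\<lambda>a. chi (a, 0)) r"

definition minimal_depth :: "'a::field \<Rightarrow> ('a \<Rightarrow> int) \<Rightarrow> ('a \<times> 'a \<Rightarrow> complex) \<Rightarrow> nat \<Rightarrow> bool" where
  "minimal_depth eps v chi r \<longleftrightarrow> depth_T eps v chi r \<and> true_depth v chi r"

end

theory Submission
  imports Defs "HOL-Algebra.Generated_Groups"
begin


lemma complex_root_ex: "n > 0 \<Longrightarrow> \<exists>c::complex. c ^ n = z"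
proof -
  assume n: "n > 0"
  have "(rcis (root n (cmod z)) (Arg z / real n)) ^ n = rcis (root n (cmod z) ^ n) (real n * (Arg z / real n))"
    by (rule DeMoivre2)
  also have "\<dots> = rcis (cmod z) (Arg z)" using n by (simp add: real_root_pow_pos2)
  also have "\<dots> = z" by (rule rcis_cmod_Arg)
  finally show ?thesis by blast
qed

lemma (in group) char_one:
  fixes phi :: "'a \<Rightarrow> complex"
  assumes K: "subgroup K G" and hom: "\<And>x y. x\<in>K \<Longrightarrow> y\<in>K \<Longrightarrow> phi (x \<otimes> y) = phi x * phi y"
    and nz: "\<And>x. x\<in>K \<Longrightarrow> phi x \<noteq> 0"
  shows "phi \<one> = 1"
proof -
  have o: "\<one> \<in> K" using K subgroup.one_closed by blast
  have "phi \<one> = phi \<one> * phi \<one>" using hom[OF o o] by simp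
  then show ?thesis using nz[OF o] by simp
qed

lemma (in group) char_int_pow:
  fixes phi :: "'a \<Rightarrow> complex"
  assumes K: "subgroup K G" and hom: "\<And>x y. x\<in>K \<Longrightarrow> y\<in>K \<Longrightarrow> phi (x \<otimes> y) = phi x * phi y"
    and nz: "\<And>x. x\<in>K \<Longrightarrow> phi x \<noteq> 0" and x: "x \<in> K"
  shows "phi (x [^] (i::int)) = phi x powi i"
proof -
  have xc: "x \<in> carrier G" using subgroup.subset[OF K] x by (rule subsetD)
  have p1: "phi \<one> = 1" by (rule char_one[OF K hom nz])
  have natK: "x [^] (n::nat) \<in> K" for n
    unfolding int_pow_int[symmetric] by (rule subgroup_int_pow_closed[OF K x])
  have nat: "phi (x [^] (n::nat)) = phi x ^ n" for n
  proof (induction n)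
    case 0 then show ?case using p1 by simp
  next
    case (Suc n)
    have "phi (x [^] Suc n) = phi (x [^] n \<otimes> x)" by (simp only: nat_pow_Suc)
    also have "\<dots> = phi (x [^] n) * phi x" by (rule hom[OF natK x])
    also have "\<dots> = phi x ^ Suc n" using Suc.IH by simp
    finally show ?case .
  qed
  show ?thesis
  proof (cases i rule: int_cases)
    case (nonneg n) 
    have "phi (x [^] i) = phi (x [^] n)" unfolding nonneg by (rule arg_cong[where f=phi], rule int_pow_int)
    then show ?thesis using nat nonneg by simp
  next
    case (neg n)
    define y where "y = x [^] Suc n"
    have yK: "y \<in> K" unfolding y_def by (rule natK)
    have iyK: "inv y \<in> K" by (rule subgroup.m_inv_closed[OF K yK])
    have yc: "y \<in> carrier G" using subgroup.subset[OF K] yK by (rule subsetD)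
    have "phi (inv y) * phi y = phi (inv y \<otimes> y)" using hom[OF iyK yK] by simp
    also have "\<dots> = 1" using p1 yc by simp
    finally have "phi y * phi (inv y) = 1" by (simp add: mult.commute)
    hence "inverse (phi y) = phi (inv y)" by (rule inverse_unique)
    hence iv: "phi (inv y) = inverse (phi y)" by simp
    have xi:  "x [^] i = inv y" unfolding neg y_def
      using int_pow_neg_int[OF xc, of "Suc n"] by simp
    have A: "phi (x [^] i) = inverse (phi y)" using iv xi by simp
    have B: "phi y = phi x ^ Suc n" unfolding y_def by (rule nat)
    have "phi (x [^] i) = inverse (phi x ^ Suc n)" using A B by simp
    also have "\<dots> = phi x powi i" unfolding neg by (simp only: power_int_minus power_int_of_nat)
    finally show ?thesis .
  qed
qed

lemma (in group) exists_c:
  fixes phi :: "'a \<Rightarrow> complex"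
  assumes K: "subgroup K G" and hom: "\<And>x y. x\<in>K \<Longrightarrow> y\<in>K \<Longrightarrow> phi (x \<otimes> y) = phi x * phi y"
    and nz: "\<And>x. x\<in>K \<Longrightarrow> phi x \<noteq> 0" and g: "g \<in> carrier G"
  shows "\<exists>c. c \<noteq> 0 \<and> (\<forall>j::int. g [^] j \<in> K \<longrightarrow> phi (g [^] j) = c powi j)"
proof (cases "\<exists>n::nat. n > 0 \<and> g [^] n \<in> K")
  case False
  have "phi (g [^] j) = 1 powi j" if j: "g [^] j \<in> K" for j :: int
  proof -
    have "j = 0"
    proof (rule ccontr)
      assume "j \<noteq> 0"
      then consider "j > 0" | "j < 0" by linarith
      then show False
      proof cases
        case 1
        then have "g [^] nat j \<in> K" using j by (simp add: pow_nat)
        then show False using False 1 by (metis zero_less_nat_eq)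
      next
        case 2
        have "g [^] (-j) = inv (g [^] j)" using g int_pow_neg by simp
        hence "g [^] (-j) \<in> K" using subgroup.m_inv_closed[OF K j] by simp
        hence "g [^] nat (-j) \<in> K" using 2 by (simp add: pow_nat)
        then show False using False 2 by (metis neg_0_less_iff_less zero_less_nat_eq)
      qed
    qed
    then show ?thesis using char_one[OF K hom nz] by simp
  qed
  then show ?thesis by (intro exI[of _ 1]) auto
next
  case True
  define m where "m = (LEAST n::nat. n > 0 \<and> g [^] n \<in> K)"
  have m: "m > 0 \<and> g [^] m \<in> K" unfolding m_def using True by (rule LeastI_ex)
  have gm: "g [^] int m \<in> K" using m by (simp only: int_pow_int)
  obtain c where c: "c ^ m = phi (g [^] int m)" using complex_root_ex m by blast
  have cnz: "c \<noteq> 0" using c nz[OF gm] m by (auto simp: zero_power)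
  have "phi (g [^] j) = c powi j" if j: "g [^] j \<in> K" for j :: int
  proof -
    define q where "q = j div int m"
    define s where "s = j mod int m"
    have js: "j = int m * q + s" unfolding q_def s_def by simp
    have s0: "0 \<le> s" "s < int m" unfolding s_def using m by auto
    have gmq: "g [^] (int m * q) \<in> K" using subgroup_int_pow_closed[OF K gm, of q] int_pow_pow[OF g] by simp
    have "g [^] j = g [^] (int m * q) \<otimes> g [^] s" using js int_pow_mult[OF g] by simp
    hence "g [^] s = inv (g [^] (int m * q)) \<otimes> g [^] j"
      using g by (simp add: inv_solve_left)
    hence gs: "g [^] s \<in> K" using subgroup.m_closed[OF K subgroup.m_inv_closed[OF K gmq] j] by simp
    have "s = 0"
    proof (rule ccontr)
      assume "s \<noteq> 0"
      hence "nat s > 0 \<and> g [^] nat s \<in> K" using s0 gs by (simp add: pow_nat)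
      hence "m \<le> nat s" unfolding m_def by (rule Least_le)
      thus False using s0 by linarith
    qed
    hence "j = int m * q" using js by simp
    hence "phi (g [^] j) = phi ((g [^] int m) [^] q)" using int_pow_pow[OF g] by simp
    also have "\<dots> = phi (g [^] int m) powi q" by (rule char_int_pow[OF K hom nz gm])
    also have "\<dots> = c powi (int m * q)" using c by (simp add: power_int_mult)
    finally show ?thesis using \<open>j = int m * q\<close> by simp
  qed
  then show ?thesis using cnz by blast
qed


lemma (in comm_group) char_extend:
  fixes f :: "'a \<Rightarrow> complex"
  assumes H: "subgroup H G" and fm: "\<And>x y. x\<in>H \<Longrightarrow> y\<in>H \<Longrightarrow> f (x \<otimes> y) = f x * f y"
    and fnz: "\<And>x. x\<in>H \<Longrightarrow> f x \<noteq> 0"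
  shows "\<exists>F. (\<forall>x\<in>carrier G. \<forall>y\<in>carrier G. F (x \<otimes> y) = F x * F y) \<and> (\<forall>x\<in>carrier G. F x \<noteq> 0) \<and> (\<forall>x\<in>H. F x = f x)"
proof -
  define good where "good = (\<lambda>\<Gamma>::('a \<times> complex) set. subgroup (fst ` \<Gamma>) G \<and>
     (\<forall>x a b. (x,a)\<in>\<Gamma> \<longrightarrow> (x,b)\<in>\<Gamma> \<longrightarrow> a=b) \<and> (\<forall>h\<in>H. (h, f h)\<in>\<Gamma>) \<and>
     (\<forall>x a y b. (x,a)\<in>\<Gamma> \<longrightarrow> (y,b)\<in>\<Gamma> \<longrightarrow> (x \<otimes> y, a*b)\<in>\<Gamma>) \<and> (\<forall>x a. (x,a)\<in>\<Gamma> \<longrightarrow> a\<noteq>0))"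
  define A where "A = Collect good"
  have chain: "\<forall>C\<in>chains A. \<exists>U\<in>A. \<forall>X\<in>C. X \<subseteq> U"
  proof
    fix C assume C: "C \<in> chains A"
    hence CA: "C \<subseteq> A" and ch: "\<And>X Y. X\<in>C \<Longrightarrow> Y\<in>C \<Longrightarrow> X \<subseteq> Y \<or> Y \<subseteq> X"
      unfolding chains_def chain_subset_def by auto
    show "\<exists>U\<in>A. \<forall>X\<in>C. X \<subseteq> U"
    proof (cases "C = {}")
      case True
      define U where "U = (\<lambda>h. (h, f h)) ` H"
      have fU: "fst ` U = H" unfolding U_def by (simp add: image_image)
      have "good U" unfolding good_def
      proof (intro conjI allI impI ballI)
        show "subgroup (fst ` U) G" using H fU by simp
      next
        fix x a b assume "(x,a)\<in>U" "(x,b)\<in>U" then show "a = b" unfolding U_def by auto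
      next
        fix h assume "h \<in> H" then show "(h, f h) \<in> U" unfolding U_def by auto
      next
        fix x a y b assume xa: "(x,a)\<in>U" and yb: "(y,b)\<in>U"
        then have x: "x \<in> H" "a = f x" and y: "y \<in> H" "b = f y" unfolding U_def by auto
        have "x \<otimes> y \<in> H" by (rule subgroup.m_closed[OF H x(1) y(1)])
        then show "(x \<otimes> y, a*b) \<in> U" unfolding U_def using x y fm by auto
      next
        fix x a assume "(x,a)\<in>U" then show "a \<noteq> 0" unfolding U_def using fnz by auto
      qed
      then show ?thesis using True A_def by auto
    next
      case False
      define U where "U = \<Union>C"
      have goodX: "good X" if "X\<in>C" for X using CA A_def that by auto
      have sgX: "subgroup (fst ` X) G" if "X\<in>C" for X using goodX[OF that] good_def by simp
      have big: "\<exists>Z\<in>C. X \<subseteq> Z \<and> Y \<subseteq> Z" if "X\<in>C" "Y\<in>C" for X Y using ch[OF that] that by blast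
      have "good U" unfolding good_def
      proof (intro conjI allI impI ballI)
        show "subgroup (fst ` U) G"
        proof (rule subgroupI)
          show "fst ` U \<subseteq> carrier G"
          proof
            fix x assume "x \<in> fst ` U"
            then obtain X where X: "X \<in> C" "x \<in> fst ` X" unfolding U_def by auto
            show "x \<in> carrier G" using subgroup.subset[OF sgX[OF X(1)]] X(2) by (rule subsetD)
          qed
        next
          obtain X where X: "X \<in> C" using False by auto
          have "\<one> \<in> fst ` X" by (rule subgroup.one_closed[OF sgX[OF X]])
          then show "fst ` U \<noteq> {}" using X unfolding U_def by auto
        next
          fix x assume "x \<in> fst ` U"
          then obtain X where X: "X \<in> C" "x \<in> fst ` X" unfolding U_def by auto
          have "inv x \<in> fst ` X" by (rule subgroup.m_inv_closed[OF sgX[OF X(1)] X(2)])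
          then show "inv x \<in> fst ` U" using X unfolding U_def by auto
        next
          fix x y assume "x \<in> fst ` U" "y \<in> fst ` U"
          then obtain X Y where X: "X \<in> C" "x \<in> fst ` X" and Y: "Y \<in> C" "y \<in> fst ` Y" unfolding U_def by auto
          obtain Z where Z: "Z \<in> C" "X \<subseteq> Z" "Y \<subseteq> Z" using big[OF X(1) Y(1)] by blast
          have "x \<in> fst ` Z" "y \<in> fst ` Z" using X(2) Y(2) Z by auto
          hence "x \<otimes> y \<in> fst ` Z" by (rule subgroup.m_closed[OF sgX[OF Z(1)]])
          then show "x \<otimes> y \<in> fst ` U" using Z unfolding U_def by auto
        qed
      next
        fix x a b assume "(x,a)\<in>U" "(x,b)\<in>U"
        then obtain X Y where X: "X \<in> C" "(x,a) \<in> X" and Y: "Y \<in> C" "(x,b) \<in> Y" unfolding U_def by auto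
        obtain Z where Z: "Z \<in> C" "X \<subseteq> Z" "Y \<subseteq> Z" using big[OF X(1) Y(1)] by blast
        show "a = b" using goodX[OF Z(1)] X Y Z unfolding good_def by blast
      next
        fix h assume "h \<in> H"
        obtain X where X: "X \<in> C" using False by auto
        then show "(h, f h) \<in> U" using goodX[OF X] \<open>h \<in> H\<close> unfolding good_def U_def by auto
      next
        fix x a y b assume "(x,a)\<in>U" "(y,b)\<in>U"
        then obtain X Y where X: "X \<in> C" "(x,a) \<in> X" and Y: "Y \<in> C" "(y,b) \<in> Y" unfolding U_def by auto
        obtain Z where Z: "Z \<in> C" "X \<subseteq> Z" "Y \<subseteq> Z" using big[OF X(1) Y(1)] by blast
        have "(x \<otimes> y, a*b) \<in> Z" using goodX[OF Z(1)] X Y Z unfolding good_def by blast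
        then show "(x \<otimes> y, a*b) \<in> U" using Z unfolding U_def by auto
      next
        fix x a assume "(x,a)\<in>U"
        then obtain X where X: "X \<in> C" "(x,a) \<in> X" unfolding U_def by auto
        then show "a \<noteq> 0" using goodX[OF X(1)] unfolding good_def by blast
      qed
      then show ?thesis using A_def U_def by auto
    qed
  qed
  obtain M where MA: "M \<in> A" and Mmax: "\<forall>X\<in>A. M \<subseteq> X \<longrightarrow> X = M"
    using Zorn_Lemma2[OF chain] by blast
  have gM: "good M" using MA A_def by simp
  define K where "K = fst ` M"
  define phi where "phi = (\<lambda>x. THE a. (x,a)\<in>M)"
  have Ksub: "subgroup K G" using gM unfolding good_def K_def by simp
  have sv: "\<And>x a b. (x,a)\<in>M \<Longrightarrow> (x,b)\<in>M \<Longrightarrow> a=b" using gM unfolding good_def by blast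
  have phieq: "phi x = a" if "(x,a)\<in>M" for x a
    unfolding phi_def using sv that by blast
  have phiM: "(x, phi x)\<in>M" if xK: "x\<in>K" for x
  proof -
    obtain a where "(x,a)\<in>M" using xK K_def by auto
    then show ?thesis using phieq by simp
  qed
  have Mmul: "\<And>x a y b. (x,a)\<in>M \<Longrightarrow> (y,b)\<in>M \<Longrightarrow> (x \<otimes> y, a*b)\<in>M" using gM unfolding good_def by blast
  have phihom: "phi (x \<otimes> y) = phi x * phi y" if "x\<in>K" "y\<in>K" for x y
    using phieq[OF Mmul[OF phiM[OF that(1)] phiM[OF that(2)]]] .
  have phinz: "phi x \<noteq> 0" if "x\<in>K" for x using phiM[OF that] gM unfolding good_def by blast
  have HM: "(h, f h) \<in> M" if "h \<in> H" for h using gM that unfolding good_def by blast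
  have phiH: "phi h = f h" if "h\<in>H" for h using phieq[OF HM[OF that]] .
  have HK: "H \<subseteq> K" using HM K_def by force
  have Kc: "x \<in> carrier G" if "x \<in> K" for x using subgroup.subset[OF Ksub] that by (rule subsetD)
  have Kfull: "K = carrier G"
  proof (rule ccontr)
    assume "K \<noteq> carrier G"
    then obtain g where g: "g \<in> carrier G" "g \<notin> K" using subgroup.subset[OF Ksub] by blast
    obtain c where c0: "c \<noteq> 0" and c: "\<And>j. g [^] j \<in> K \<Longrightarrow> phi (g [^] j) = c powi j"
      using exists_c[OF Ksub phihom phinz g(1)] by blast
    define M' where "M' = {(x \<otimes> g [^] k, phi x * c powi k) | x (k::int). x \<in> K}"
    have key: "phi x * c powi k = phi y * c powi l"
      if x: "x\<in>K" and y: "y\<in>K" and eq: "x \<otimes> g [^] (k::int) = y \<otimes> g [^] (l::int)" for x y k l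
    proof -
      have xc: "x \<in> carrier G" and yc: "y \<in> carrier G" using Kc x y by auto
      have gk: "g [^] k = g [^] (k-l) \<otimes> g [^] l" using int_pow_mult[OF g(1), of "k-l" l] by simp
      have "(x \<otimes> g [^] (k-l)) \<otimes> g [^] l = y \<otimes> g [^] l"
        using eq gk xc g(1) by (simp add: m_assoc)
      hence e2: "x \<otimes> g [^] (k-l) = y" using xc yc g(1) by simp
      hence "g [^] (k-l) = inv x \<otimes> y" using xc yc g(1) by (simp add: inv_solve_left)
      hence "g [^] (k-l) \<in> K" using subgroup.m_closed[OF Ksub subgroup.m_inv_closed[OF Ksub x] y] by simp
      hence gK: "g [^] (k-l) \<in> K" and pg: "phi (g [^] (k-l)) = c powi (k-l)" using c by auto
      have "phi y = phi x * c powi (k-l)" using phihom[OF x gK] pg e2 by simp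
      hence "phi y * c powi l = phi x * (c powi (k-l) * c powi l)" by simp
      also have "c powi (k-l) * c powi l = c powi k" using c0 power_int_add[of c "k-l" l] by simp
      finally show ?thesis by simp
    qed
    have fM': "fst ` M' = {x \<otimes> g [^] k | x (k::int). x \<in> K}" unfolding M'_def by force
    have "good M'" unfolding good_def
    proof (intro conjI allI impI ballI)
      show "subgroup (fst ` M') G" unfolding fM'
      proof (rule subgroupI)
        show "{x \<otimes> g [^] k | x (k::int). x \<in> K} \<subseteq> carrier G" using Kc g(1) by auto
      next
        have "\<one> \<otimes> g [^] (0::int) \<in> {x \<otimes> g [^] k | x (k::int). x \<in> K}"
          using subgroup.one_closed[OF Ksub] by blast
        then show "{x \<otimes> g [^] k | x (k::int). x \<in> K} \<noteq> {}" by blast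
      next
        fix a assume "a \<in> {x \<otimes> g [^] k | x (k::int). x \<in> K}"
        then obtain x k where x: "x \<in> K" and a: "a = x \<otimes> g [^] (k::int)" by blast
        have xc: "x \<in> carrier G" using Kc x by auto
        have "inv a = inv x \<otimes> g [^] (-k)" unfolding a using xc g(1) by (simp add: inv_mult int_pow_neg)
        moreover have "inv x \<in> K" by (rule subgroup.m_inv_closed[OF Ksub x])
        ultimately show "inv a \<in> {x \<otimes> g [^] k | x (k::int). x \<in> K}" by blast
      next
        fix a b assume "a \<in> {x \<otimes> g [^] k | x (k::int). x \<in> K}" "b \<in> {x \<otimes> g [^] k | x (k::int). x \<in> K}"
        then obtain x k y l where x: "x \<in> K" and a: "a = x \<otimes> g [^] (k::int)"
          and y: "y \<in> K" and b: "b = y \<otimes> g [^] (l::int)" by blast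
        have xc: "x \<in> carrier G" and yc: "y \<in> carrier G" using Kc x y by auto
        have "a \<otimes> b = (x \<otimes> y) \<otimes> g [^] (k + l)" unfolding a b
          using xc yc g(1) by (simp add: int_pow_mult m_ac)
        moreover have "x \<otimes> y \<in> K" by (rule subgroup.m_closed[OF Ksub x y])
        ultimately show "a \<otimes> b \<in> {x \<otimes> g [^] k | x (k::int). x \<in> K}" by blast
      qed
    next
      fix z a b assume "(z,a)\<in>M'" "(z,b)\<in>M'"
      then obtain x k y l where x: "x \<in> K" "z = x \<otimes> g [^] (k::int)" "a = phi x * c powi k"
        and y: "y \<in> K" "z = y \<otimes> g [^] (l::int)" "b = phi y * c powi l" unfolding M'_def by blast
      show "a = b" using key[OF x(1) y(1)] x y by simp
    next
      fix h assume h: "h \<in> H"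
      have hK: "h \<in> K" using HK h by auto
      have "(h \<otimes> g [^] (0::int), phi h * c powi 0) \<in> M'" unfolding M'_def using hK by blast
      then show "(h, f h) \<in> M'" using Kc[OF hK] phiH[OF h] by simp
    next
      fix z a w b assume "(z,a)\<in>M'" "(w,b)\<in>M'"
      then obtain x k y l where x: "x \<in> K" "z = x \<otimes> g [^] (k::int)" "a = phi x * c powi k"
        and y: "y \<in> K" "w = y \<otimes> g [^] (l::int)" "b = phi y * c powi l" unfolding M'_def by blast
      have xc: "x \<in> carrier G" and yc: "y \<in> carrier G" using Kc x y by auto
      have xy: "x \<otimes> y \<in> K" by (rule subgroup.m_closed[OF Ksub x(1) y(1)])
      have "z \<otimes> w = (x \<otimes> y) \<otimes> g [^] (k + l)" unfolding x y
        using xc yc g(1) by (simp add: int_pow_mult m_ac)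
      moreover have "a * b = phi (x \<otimes> y) * c powi (k + l)"
        unfolding x y phihom[OF x(1) y(1)] using c0 by (simp add: power_int_add)
      ultimately show "(z \<otimes> w, a * b) \<in> M'" unfolding M'_def using xy by blast
    next
      fix z a assume "(z,a)\<in>M'"
      then obtain x k where x: "x \<in> K" "a = phi x * c powi (k::int)" unfolding M'_def by blast
      then show "a \<noteq> 0" using phinz c0 by simp
    qed
    hence M'A: "M' \<in> A" using A_def by simp
    have "M \<subseteq> M'"
    proof
      fix p assume p: "p \<in> M"
      obtain x a where xa: "p = (x,a)" by (cases p)
      have x: "x \<in> K" using p xa K_def by force
      have "(x \<otimes> g [^] (0::int), phi x * c powi 0) \<in> M'" unfolding M'_def using x by blast
      then show "p \<in> M'" using xa Kc[OF x] phieq p by simp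
    qed
    hence "M' = M" using Mmax M'A by blast
    moreover have "(\<one> \<otimes> g [^] (1::int), phi \<one> * c powi 1) \<in> M'"
      unfolding M'_def using subgroup.one_closed[OF Ksub] by blast
    ultimately have "g \<in> K" unfolding K_def using g(1) by force
    then show False using g(2) by simp
  qed
  show ?thesis
  proof (intro exI[of _ phi] conjI ballI)
    fix x y assume "x \<in> carrier G" "y \<in> carrier G"
    then show "phi (x \<otimes> y) = phi x * phi y" using phihom Kfull by simp
  next
    fix x assume "x \<in> carrier G" then show "phi x \<noteq> 0" using phinz Kfull by simp
  next
    fix x assume "x \<in> H" then show "phi x = f x" by (rule phiH)
  qed
qed



context
  fixes v :: "'a::field \<Rightarrow> int"
  assumes nl: "nonarch_local_field v"
begin

lemma vmul: "x \<noteq> 0 \<Longrightarrow> y \<noteq> 0 \<Longrightarrow> v (x * y) = v x + v y"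
  using nl unfolding nonarch_local_field_def by blast

lemma vadd: "x \<noteq> 0 \<Longrightarrow> y \<noteq> 0 \<Longrightarrow> x + y \<noteq> 0 \<Longrightarrow> min (v x) (v y) \<le> v (x + y)"
  using nl unfolding nonarch_local_field_def by blast

lemma v1: "v 1 = 0"
  using vmul[of 1 1] by simp

lemma vm1: "v (-1) = 0"
  using vmul[of "-1" "-1"] v1 by simp

lemma vneg: "x \<noteq> 0 \<Longrightarrow> v (-x) = v x"
  using vmul[of "-1" x] vm1 by simp

lemma vinv: "x \<noteq> 0 \<Longrightarrow> v (inverse x) = - v x"
  using vmul[of x "inverse x"] v1 by simp

lemma vdiv: "x \<noteq> 0 \<Longrightarrow> y \<noteq> 0 \<Longrightarrow> v (x / y) = v x - v y"
  using vmul[of x "inverse y"] vinv[of y] by (simp add: divide_inverse)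

lemma pF_0: "0 \<in> pF v k" unfolding pF_def by simp

lemma pF_neg: "x \<in> pF v k \<Longrightarrow> -x \<in> pF v k"
  unfolding pF_def using vneg by force

lemma pF_add: assumes "x \<in> pF v k" "y \<in> pF v k" shows "x + y \<in> pF v k"
proof (cases "x = 0 \<or> y = 0 \<or> x + y = 0")
  case True then show ?thesis using assms pF_0 by auto
next
  case False
  then have "min (v x) (v y) \<le> v (x + y)" using vadd by blast
  then show ?thesis using assms False unfolding pF_def by auto
qed

lemma pF_diff: "x \<in> pF v k \<Longrightarrow> y \<in> pF v k \<Longrightarrow> x - y \<in> pF v k"
  using pF_add[of x k "-y"] pF_neg[of y k] by simp

lemma pF_mul: assumes "x \<in> pF v j" "y \<in> pF v k" shows "x * y \<in> pF v (j + k)"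
  using assms vmul unfolding pF_def by force

lemma pF_mul0: "x \<in> pF v k \<Longrightarrow> y \<in> pF v 0 \<Longrightarrow> x * y \<in> pF v k"
  using pF_mul[of x k y 0] by simp

lemma pF_mono: "k \<le> j \<Longrightarrow> x \<in> pF v j \<Longrightarrow> x \<in> pF v k"
  unfolding pF_def by auto

lemma pF_unit_div: "u \<noteq> 0 \<Longrightarrow> v u = 0 \<Longrightarrow> x \<in> pF v k \<Longrightarrow> x / u \<in> pF v k"
  unfolding pF_def using vdiv by force

lemma pF_1: "1 \<in> pF v 0" unfolding pF_def using v1 by simp

lemma one_plus_nz: "k \<ge> 1 \<Longrightarrow> n \<in> pF v k \<Longrightarrow> 1 + n \<noteq> 0"
  unfolding pF_def using vm1 by (auto simp: add_eq_0_iff)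

lemma one_plus_v: assumes "k \<ge> 1" "n \<in> pF v k" shows "v (1 + n) = 0"
proof -
  have nz: "1 + n \<noteq> 0" by (rule one_plus_nz[OF assms])
  show ?thesis
  proof (cases "n = 0")
    case True then show ?thesis using v1 by simp
  next
    case False
    have vn: "v n \<ge> 1" using assms False unfolding pF_def by auto
    have a: "min (v 1) (v n) \<le> v (1 + n)" using vadd[of 1 n] False nz by simp
    have b: "min (v (1 + n)) (v (-n)) \<le> v ((1 + n) + (-n))" using vadd[of "1+n" "-n"] False nz by simp
    show ?thesis using a b vn vneg[OF False] v1 by auto
  qed
qed

end


definition GE :: "'a::field \<Rightarrow> ('a \<times> 'a) monoid" where
  "GE eps = \<lparr>carrier = {z. z \<noteq> (0,0)}, mult = emult eps, one = (1,0)\<rparr>"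

lemma GE_simps [simp]: "carrier (GE eps) = {z. z \<noteq> (0,0)}" "mult (GE eps) = emult eps" "one (GE eps) = (1,0)"
  unfolding GE_def by simp_all

lemma emult_comm: "emult eps z w = emult eps w z"
  unfolding emult_def by (simp add: algebra_simps)

lemma emult_assoc: "emult eps (emult eps z w) u = emult eps z (emult eps w u)"
  unfolding emult_def by (simp add: algebra_simps)

lemma enorm_mult: "enorm eps (emult eps z w) = enorm eps z * enorm eps w"
  unfolding enorm_def emult_def by (simp add: algebra_simps)

lemma emult_real: "emult eps (x, 0) (a, b) = (x * a, x * b)"
  unfolding emult_def by simp

lemma emult_real2: "emult eps (x, 0) (y, 0) = (x * y, 0)"
  unfolding emult_def by simp

context
  fixes eps :: "'a::field"
  assumes nsq: "\<not> (\<exists>y. y * y = eps)"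
begin

lemma enorm_nz: assumes "z \<noteq> (0,0)" shows "enorm eps z \<noteq> 0"
proof
  assume N: "enorm eps z = 0"
  obtain x y where z: "z = (x, y)" by (cases z)
  show False
  proof (cases "y = 0")
    case True
    then have "x \<noteq> 0" using assms z by simp
    then show False using N z True unfolding enorm_def by simp
  next
    case False
    have "x * x = eps * y * y" using N z unfolding enorm_def by simp
    then have "(x / y) * (x / y) = eps" using False by (simp add: field_simps)
    then show False using nsq by blast
  qed
qed

lemma emult_nz: "z \<noteq> (0,0) \<Longrightarrow> w \<noteq> (0,0) \<Longrightarrow> emult eps z w \<noteq> (0,0)"
  using enorm_nz[of z] enorm_nz[of w] enorm_mult[of eps z w] unfolding enorm_def by auto

lemma einv_l: assumes "z \<noteq> (0,0)" shows "emult eps (einv eps z) z = (1, 0)"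
proof -
  obtain x y where z: "z = (x, y)" by (cases z)
  define N where "N = x * x - eps * y * y"
  have N: "N \<noteq> 0" using enorm_nz[OF assms] z unfolding N_def enorm_def by simp
  have e: "einv eps (x, y) = (x / N, - y / N)" unfolding einv_def enorm_def N_def by simp
  have "x / N * x + eps * (- y / N) * y = (x * x - eps * y * y) / N" using N by (simp add: field_simps)
  also have "\<dots> = 1" using N N_def by simp
  finally have 1: "x / N * x + eps * (- y / N) * y = 1" .
  have 2: "x / N * y + (- y / N) * x = 0" by (simp add: field_simps)
  show ?thesis unfolding z e emult_def using 1 2 by simp
qed

lemma einv_nz: assumes "z \<noteq> (0,0)" shows "einv eps z \<noteq> (0,0)"
proof
  assume "einv eps z = (0,0)"
  then have "emult eps (0,0) z = (1,0)" using einv_l[OF assms] by simp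
  then show False unfolding emult_def by simp
qed

lemma GE_comm_group: "comm_group (GE eps)"
proof (rule comm_groupI)
  fix x y assume "x \<in> carrier (GE eps)" "y \<in> carrier (GE eps)"
  then show "x \<otimes>\<^bsub>GE eps\<^esub> y \<in> carrier (GE eps)" using emult_nz by simp
next
  show "\<one>\<^bsub>GE eps\<^esub> \<in> carrier (GE eps)" by simp
next
  fix x y z show "x \<otimes>\<^bsub>GE eps\<^esub> y \<otimes>\<^bsub>GE eps\<^esub> z = x \<otimes>\<^bsub>GE eps\<^esub> (y \<otimes>\<^bsub>GE eps\<^esub> z)"
    by (simp add: emult_assoc)
next
  fix x y show "x \<otimes>\<^bsub>GE eps\<^esub> y = y \<otimes>\<^bsub>GE eps\<^esub> x" by (simp add: emult_comm)
next
  fix x show "\<one>\<^bsub>GE eps\<^esub> \<otimes>\<^bsub>GE eps\<^esub> x = x" by (cases x) (simp add: emult_def)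
next
  fix x assume "x \<in> carrier (GE eps)"
  then show "\<exists>y\<in>carrier (GE eps). y \<otimes>\<^bsub>GE eps\<^esub> x = \<one>\<^bsub>GE eps\<^esub>"
    using einv_l einv_nz by (intro bexI[of _ "einv eps x"]) auto
qed

lemma GE_inv: "z \<noteq> (0,0) \<Longrightarrow> inv\<^bsub>GE eps\<^esub> z = einv eps z"
  using group.inv_equality[OF comm_group.axioms(2)[OF GE_comm_group], of "einv eps z" z] einv_l einv_nz
  by simp

end


context
  fixes v :: "'a::field \<Rightarrow> int" and eps :: 'a
  assumes nl: "nonarch_local_field v" and two0: "(2::'a) \<noteq> 0" and v2: "v 2 = 0"
    and veps: "v eps = 0" and nsq: "\<not> (\<exists>y. y * y = eps)"
begin

lemma eps_pF: "eps \<in> pF v 0" unfolding pF_def using veps by simp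

lemma pF_le0: "k \<ge> 0 \<Longrightarrow> x \<in> pF v k \<Longrightarrow> x \<in> pF v 0"
  by (rule pF_mono[OF nl])

lemma Tn_iff: "n \<ge> 1 \<Longrightarrow> z \<in> Tn eps v n \<longleftrightarrow> fst z - 1 \<in> pF v (int n) \<and> snd z \<in> pF v (int n)"
  unfolding Tn_def pE_def by simp

lemma Tn_nz: assumes "n \<ge> 1" "z \<in> Tn eps v n" shows "z \<noteq> (0,0)"
proof -
  have "1 + (fst z - 1) \<noteq> 0" using one_plus_nz[OF nl, of "int n" "fst z - 1"] assms Tn_iff by simp
  then show ?thesis by auto
qed

lemma Tn_one: "n \<ge> 1 \<Longrightarrow> (1, 0) \<in> Tn eps v n"
  using Tn_iff pF_0[OF nl] by simp

lemma Tn_mul: assumes n: "n \<ge> 1" and z: "z \<in> Tn eps v n" and w: "w \<in> Tn eps v n"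
  shows "emult eps z w \<in> Tn eps v n"
proof -
  obtain x y where zz: "z = (x, y)" by (cases z)
  obtain x' y' where ww: "w = (x', y')" by (cases w)
  define a where "a = x - 1"
  define c where "c = x' - 1"
  have a: "a \<in> pF v n" and b: "y \<in> pF v n" using z zz Tn_iff[OF n] a_def by auto
  have c: "c \<in> pF v n" and d: "y' \<in> pF v n" using w ww Tn_iff[OF n] c_def by auto
  have a0: "a \<in> pF v 0" and c0: "c \<in> pF v 0" and b0: "y \<in> pF v 0" and d0: "y' \<in> pF v 0"
    using pF_le0[of "int n"] a b c d by auto
  have e1: "fst (emult eps z w) - 1 = a + c + a * c + (eps * y) * y'"
    unfolding zz ww emult_def a_def c_def by (simp add: algebra_simps)
  have e2: "snd (emult eps z w) = y' + a * y' + y + y * c"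
    unfolding zz ww emult_def a_def c_def by (simp add: algebra_simps)
  have "eps * y \<in> pF v n" using pF_mul0[OF nl b eps_pF] by (simp add: mult.commute)
  then have t: "(eps * y) * y' \<in> pF v n" using pF_mul0[OF nl _ d0] by simp
  have 1: "fst (emult eps z w) - 1 \<in> pF v n" unfolding e1
    using pF_add[OF nl] pF_mul0[OF nl a c0] a c t by simp
  have 2: "snd (emult eps z w) \<in> pF v n" unfolding e2
    using pF_add[OF nl] pF_mul0[OF nl a d0] pF_mul0[OF nl b c0] b d by simp
  show ?thesis using 1 2 Tn_iff[OF n] by simp
qed

lemma Tn_einv: assumes n: "n \<ge> 1" and z: "z \<in> Tn eps v n"
  shows "einv eps z \<in> Tn eps v n"
proof -
  obtain x y where zz: "z = (x, y)" by (cases z)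
  define a where "a = x - 1"
  have a: "a \<in> pF v n" and b: "y \<in> pF v n" using z zz Tn_iff[OF n] a_def by auto
  have a0: "a \<in> pF v 0" and b0: "y \<in> pF v 0" using pF_le0[of "int n"] a b by auto
  define m where "m = 2 * a + a * a - eps * y * y"
  have "a + a \<in> pF v n" by (rule pF_add[OF nl a a])
  then have "2 * a \<in> pF v n" by (simp only: mult_2)
  moreover have "a * a \<in> pF v n" using pF_mul0[OF nl a a0] .
  moreover have "eps * y * y \<in> pF v n" using pF_mul0[OF nl pF_mul0[OF nl b eps_pF] b0] by (simp add: mult.commute)
  ultimately have m: "m \<in> pF v n" unfolding m_def using pF_add[OF nl] pF_diff[OF nl] by simp
  define N where "N = enorm eps z"
  have NN: "N = 1 + m" unfolding N_def m_def zz enorm_def a_def by (simp add: algebra_simps)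
  have n1: "int n \<ge> 1" using n by simp
  have Nnz: "N \<noteq> 0" using one_plus_nz[OF nl n1 m] NN by simp
  have vN: "v N = 0" using one_plus_v[OF nl n1 m] NN by simp
  have e: "einv eps z = (x / N, - y / N)" unfolding einv_def N_def zz by simp
  have "x / N - 1 = (a - m) / N" unfolding a_def using Nnz NN by (simp add: field_simps)
  moreover have "(a - m) / N \<in> pF v n" using pF_unit_div[OF nl Nnz vN pF_diff[OF nl a m]] .
  moreover have "- y / N \<in> pF v n" using pF_unit_div[OF nl Nnz vN pF_neg[OF nl b]] .
  ultimately show ?thesis unfolding e using Tn_iff[OF n] by simp
qed

lemma GE_group: "group (GE eps)"
  using comm_group.axioms(2)[OF GE_comm_group[OF nsq]] .

lemma Tn_subgroup: assumes n: "n \<ge> 1" shows "subgroup (Tn eps v n) (GE eps)"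
proof (rule group.subgroupI[OF GE_group])
  show "Tn eps v n \<subseteq> carrier (GE eps)" using Tn_nz[OF n] by auto
  show "Tn eps v n \<noteq> {}" using Tn_one[OF n] by auto
  fix a assume a: "a \<in> Tn eps v n"
  then show "inv\<^bsub>GE eps\<^esub> a \<in> Tn eps v n" using GE_inv[OF nsq Tn_nz[OF n a]] Tn_einv[OF n a] by simp
next
  fix a b assume "a \<in> Tn eps v n" "b \<in> Tn eps v n"
  then show "a \<otimes>\<^bsub>GE eps\<^esub> b \<in> Tn eps v n" using Tn_mul[OF n] by simp
qed

lemma Tn_mono: assumes "1 \<le> m" "m \<le> n" shows "Tn eps v n \<subseteq> Tn eps v m"
proof
  fix z assume "z \<in> Tn eps v n"
  then have "fst z - 1 \<in> pF v n" "snd z \<in> pF v n" using Tn_iff[of n z] assms by auto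
  then have "fst z - 1 \<in> pF v m" "snd z \<in> pF v m" using pF_mono[OF nl, of "int m" "int n"] assms by auto
  then show "z \<in> Tn eps v m" using Tn_iff[of m z] assms by auto
qed

lemma Sn_nz: "a \<in> Sn v n \<Longrightarrow> a \<noteq> 0"
  unfolding Sn_def pF_def using vm1[OF nl] by (auto split: if_splits)

lemma Sn_Tn: assumes "a \<in> Sn v n" shows "(a, 0) \<in> Tn eps v n"
proof (cases "n = 0")
  case True
  then have a: "a \<in> pF v 0" "a \<noteq> 0" "inverse a \<in> pF v 0" using assms unfolding Sn_def by auto
  have "einv eps (a, 0) = (inverse a, 0)" unfolding einv_def enorm_def using a(2) by (simp add: field_simps)
  then show ?thesis using True a pF_0[OF nl] unfolding Tn_def pE_def by simp
next
  case False
  then show ?thesis using assms pF_0[OF nl] unfolding Tn_def Sn_def pE_def by simp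
qed

lemma Tn_Sn: "n \<ge> 1 \<Longrightarrow> (a, 0) \<in> Tn eps v n \<Longrightarrow> a \<in> Sn v n"
  unfolding Tn_def Sn_def pE_def by simp


lemma eps_nz: "eps \<noteq> 0" using nsq by auto

lemma econj_nz: "a \<noteq> (0,0) \<Longrightarrow> econj a \<noteq> (0,0)"
  unfolding econj_def by (cases a) auto

lemma econj_mult: "econj (emult eps a b) = emult eps (econj a) (econj b)"
  unfolding econj_def emult_def by (simp add: algebra_simps)

lemma tdet_G: "a \<noteq> (0,0) \<Longrightarrow> tdet eps a = a \<otimes>\<^bsub>GE eps\<^esub> inv\<^bsub>GE eps\<^esub> (econj a)"
  unfolding tdet_def using GE_inv[OF nsq econj_nz] by simp

lemma tdet_mult: assumes a: "a \<noteq> (0,0)" and b: "b \<noteq> (0,0)"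
  shows "tdet eps (emult eps a b) = emult eps (tdet eps a) (tdet eps b)"
proof -
  interpret G: comm_group "GE eps" by (rule GE_comm_group[OF nsq])
  have ab: "emult eps a b \<noteq> (0,0)" by (rule emult_nz[OF nsq a b])
  have ca: "econj a \<in> carrier (GE eps)" and cb: "econj b \<in> carrier (GE eps)" using econj_nz[OF a] econj_nz[OF b] by auto
  have ac: "a \<in> carrier (GE eps)" and bc: "b \<in> carrier (GE eps)" using a b by auto
  have "tdet eps (emult eps a b) = (a \<otimes>\<^bsub>GE eps\<^esub> b) \<otimes>\<^bsub>GE eps\<^esub> inv\<^bsub>GE eps\<^esub> (econj a \<otimes>\<^bsub>GE eps\<^esub> econj b)"
    using tdet_G[OF ab] econj_mult by simp
  also have "\<dots> = (a \<otimes>\<^bsub>GE eps\<^esub> inv\<^bsub>GE eps\<^esub> (econj a)) \<otimes>\<^bsub>GE eps\<^esub> (b \<otimes>\<^bsub>GE eps\<^esub> inv\<^bsub>GE eps\<^esub> (econj b))"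
    using G.inv_mult[OF ca cb] ca cb ac bc by (simp add: G.m_ac del: GE_simps)
  also have "\<dots> = emult eps (tdet eps a) (tdet eps b)" using tdet_G[OF a] tdet_G[OF b] by simp
  finally show ?thesis .
qed

lemma tdet_eq: assumes a: "a \<noteq> (0,0)" and b: "b \<noteq> (0,0)" and eq: "tdet eps a = tdet eps b"
  shows "\<exists>x. x \<noteq> 0 \<and> a = emult eps (x, 0) b"
proof -
  interpret G: comm_group "GE eps" by (rule GE_comm_group[OF nsq])
  define z where "z = tdet eps a"
  have ca: "econj a \<in> carrier (GE eps)" and cb: "econj b \<in> carrier (GE eps)" using econj_nz[OF a] econj_nz[OF b] by auto
  have ac: "a \<in> carrier (GE eps)" and bc: "b \<in> carrier (GE eps)" using a b by auto
  have za': "(a \<otimes>\<^bsub>GE eps\<^esub> inv\<^bsub>GE eps\<^esub> (econj a)) \<otimes>\<^bsub>GE eps\<^esub> econj a = a"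
    using ca ac by (simp add: G.m_assoc del: GE_simps)
  have za: "emult eps z (econj a) = a" using za' unfolding z_def tdet_G[OF a] by simp
  have zb': "(b \<otimes>\<^bsub>GE eps\<^esub> inv\<^bsub>GE eps\<^esub> (econj b)) \<otimes>\<^bsub>GE eps\<^esub> econj b = b"
    using cb bc by (simp add: G.m_assoc del: GE_simps)
  have zb: "emult eps z (econj b) = b" using zb' unfolding z_def eq tdet_G[OF b] by simp
  have "emult eps a (econj b) = emult eps (econj a) b"
    by (metis za zb emult_assoc emult_comm)
  moreover obtain p q where aa: "a = (p, q)" by (cases a)
  moreover obtain s t where bb: "b = (s, t)" by (cases b)
  ultimately have "p * (- t) + q * s = p * t + (- q) * s" unfolding emult_def econj_def by simp
  then have "2 * (q * s - p * t) = 0" by (simp add: algebra_simps)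
  then have qs: "q * s = p * t" using two0 by simp
  define N where "N = s * s - eps * t * t"
  have N: "N \<noteq> 0" using enorm_nz[OF nsq b] bb unfolding N_def enorm_def by simp
  define x where "x = (p * s - eps * q * t) / N"
  have 1: "x * s = p"
  proof -
    have "x * s = (p * s * s - eps * t * (q * s)) / N" unfolding x_def by (simp add: algebra_simps)
    also have "\<dots> = p * N / N" unfolding qs N_def by (simp add: algebra_simps)
    finally show ?thesis using N by simp
  qed
  have 2: "x * t = q"
  proof -
    have "x * t = (s * (p * t) - eps * q * t * t) / N" unfolding x_def by (simp add: algebra_simps)
    also have "\<dots> = q * N / N" unfolding qs[symmetric] N_def by (simp add: algebra_simps)
    finally show ?thesis using N by simp
  qed
  have "a = emult eps (x, 0) b" unfolding aa bb emult_real using 1 2 by simp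
  moreover have "x \<noteq> 0" using 1 2 a aa by auto
  ultimately show ?thesis by blast
qed

lemma tdet_surj: assumes z: "z \<in> E1 eps"
  shows "\<exists>a. a \<noteq> (0,0) \<and> tdet eps a = z \<and> (fst z \<noteq> -1 \<longrightarrow> a = (1 + fst z, snd z))"
proof -
  obtain x y where zz: "z = (x, y)" by (cases z)
  have n: "x * x - eps * y * y = 1" using z zz unfolding E1_def enorm_def by simp
  show ?thesis
  proof (cases "x = -1")
    case True
    then have "y = 0" using n eps_nz by simp
    have "tdet eps (0, 1) = (-1, 0)"
      unfolding tdet_def emult_def einv_def econj_def enorm_def using eps_nz by simp
    then show ?thesis using True \<open>y = 0\<close> zz by (intro exI[of _ "(0,1)"]) simp
  next
    case False
    then have x1: "1 + x \<noteq> 0" by (metis add.commute add_eq_0_iff)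
    define D where "D = 2 * (1 + x)"
    have D: "D \<noteq> 0" unfolding D_def using x1 two0 by (metis mult_eq_0_iff)
    have e: "enorm eps (econj (1 + x, y)) = D" unfolding D_def enorm_def econj_def
      using n by (simp add: algebra_simps)
    have t: "tdet eps (1 + x, y) = (((1 + x) * (1 + x) + eps * y * y) / D, 2 * (1 + x) * y / D)"
      unfolding tdet_def einv_def e unfolding emult_def econj_def by (simp add: field_simps D)
    have f1: "((1 + x) * (1 + x) + eps * y * y) / D = x"
    proof -
      have "eps * y * y = x * x - 1" using n by (simp add: algebra_simps)
      then have "(1 + x) * (1 + x) + eps * y * y = x * D" unfolding D_def by (simp add: algebra_simps)
      then show ?thesis using D by simp
    qed
    have f2: "2 * (1 + x) * y / D = y" using D unfolding D_def by simp
    show ?thesis using t f1 f2 zz x1 by (intro exI[of _ "(1 + x, y)"]) simp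
  qed
qed

end



lemma (in comm_group) swap_lemma:
  assumes "a \<in> carrier G" "b \<in> carrier G" "u \<in> carrier G" "w \<in> carrier G" "a \<otimes> u = b \<otimes> w"
  shows "a \<otimes> inv b = w \<otimes> inv u"
proof -
  have "a = (a \<otimes> u) \<otimes> inv u" using assms(1,3) by (simp add: m_assoc)
  also have "\<dots> = (b \<otimes> w) \<otimes> inv u" using assms by simp
  finally have a: "a = (b \<otimes> w) \<otimes> inv u" .
  have ib: "inv b \<in> carrier G" and iu: "inv u \<in> carrier G" using assms by auto
  have "a \<otimes> inv b = ((b \<otimes> w) \<otimes> inv u) \<otimes> inv b" unfolding a ..
  also have "\<dots> = ((w \<otimes> b) \<otimes> inv u) \<otimes> inv b" using m_comm[of b w] assms by simp
  also have "\<dots> = w \<otimes> (b \<otimes> (inv u \<otimes> inv b))" using assms ib iu by (simp only: m_assoc m_closed)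
  also have "\<dots> = w \<otimes> (b \<otimes> (inv b \<otimes> inv u))" using m_comm[OF iu ib] by simp
  also have "\<dots> = w \<otimes> ((b \<otimes> inv b) \<otimes> inv u)" using assms ib iu by (simp only: m_assoc m_closed)
  also have "\<dots> = w \<otimes> inv u" using assms iu by simp
  finally show ?thesis .
qed

lemma emult_4: "emult eps (emult eps a u) (emult eps b w) = emult eps (emult eps a b) (emult eps u w)"
  unfolding emult_def by (simp add: algebra_simps)

theorem theorem3p3:
  fixes v :: "'a::field \<Rightarrow> int" and eps :: 'a
    and chi :: "'a \<times> 'a \<Rightarrow> complex" and r :: nat
  assumes "nonarch_local_field v"
    and "odd_residual_char v"
    and "eps \<noteq> 0" and "v eps = 0" and "\<not> (\<exists>y. y * y = eps)"
    and "char_T eps v chi"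
    and "true_depth v chi r"
  shows "\<exists>phi chi'. char_E1 eps v phi \<and> char_T eps v chi' \<and> minimal_depth eps v chi' r \<and>
           (\<forall>a. a \<noteq> (0, 0) \<longrightarrow> chi a = phi (tdet eps a) * chi' a)"
proof -
  note nl = assms(1) and veps = assms(4) and nsq = assms(5)
  have two0: "(2::'a) \<noteq> 0" and v2: "v 2 = 0" using assms(2) unfolding odd_residual_char_def by auto
  interpret G: comm_group "GE eps" by (rule GE_comm_group[OF nsq])
  have chimul: "\<And>a b. a \<noteq> (0,0) \<Longrightarrow> b \<noteq> (0,0) \<Longrightarrow> chi (emult eps a b) = chi a * chi b"
    and chinz: "\<And>a. a \<noteq> (0,0) \<Longrightarrow> chi a \<noteq> 0"
    using assms(6) unfolding char_T_def by auto
  obtain N where N1: "N \<ge> 1" and NT: "\<And>a. a \<in> Tn eps v N \<Longrightarrow> chi a = 1"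
    using assms(6) unfolding char_T_def by auto
  have S1: "\<And>x. x \<in> Sn v (Suc r) \<Longrightarrow> chi (x, 0) = 1"
    and S2: "(\<exists>x\<in>Sn v r. chi (x, 0) \<noteq> 1) \<or> (r = 0 \<and> (\<forall>x\<in>Sn v 0. chi (x, 0) = 1))"
    using assms(7) unfolding true_depth_def has_depth_def by auto
  define U where "U = Tn eps v (Suc r)"
  have Usub: "subgroup U (GE eps)" unfolding U_def by (rule Tn_subgroup[OF nl two0 v2 veps nsq]) simp
  have Unz: "\<And>u. u \<in> U \<Longrightarrow> u \<noteq> (0,0)" unfolding U_def using Tn_nz[OF nl two0 v2 veps nsq, of "Suc r"] by simp
  have chi1: "chi (1, 0) = 1"
  proof -
    have "chi (1,0) = chi (1,0) * chi (1,0)" using chimul[of "(1,0)" "(1,0)"] by (simp add: emult_real2)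
    then show ?thesis using chinz[of "(1,0)"] by simp
  qed
  have realc: "(x, 0) \<in> carrier (GE eps)" if "x \<noteq> 0" for x :: 'a using that by simp
  have wd: "chi (x, 0) = chi (x', 0)"
    if x: "x \<noteq> 0" and x': "x' \<noteq> 0" and u: "u \<in> U" and u': "u' \<in> U"
      and eq: "emult eps (x, 0) u = emult eps (x', 0) u'" for x x' u u'
  proof -
    have uc: "u \<in> carrier (GE eps)" and u'c: "u' \<in> carrier (GE eps)" using Unz u u' by auto
    have "(x, 0) \<otimes>\<^bsub>GE eps\<^esub> inv\<^bsub>GE eps\<^esub> (x', 0) = u' \<otimes>\<^bsub>GE eps\<^esub> inv\<^bsub>GE eps\<^esub> u"
      using G.swap_lemma[OF realc[OF x] realc[OF x'] uc u'c] eq by simp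
    moreover have "u' \<otimes>\<^bsub>GE eps\<^esub> inv\<^bsub>GE eps\<^esub> u \<in> U"
      using subgroup.m_closed[OF Usub u' subgroup.m_inv_closed[OF Usub u]] .
    moreover have "inv\<^bsub>GE eps\<^esub> (x', 0) = (inverse x', 0)"
      using GE_inv[OF nsq, of "(x',0)"] x' unfolding einv_def enorm_def by (simp add: field_simps)
    ultimately have "(x / x', 0) \<in> U" by (simp add: emult_real2 field_simps)
    then have "x / x' \<in> Sn v (Suc r)" unfolding U_def by (rule Tn_Sn[OF nl two0 v2 veps nsq, rotated]) simp
    then have c1: "chi (x / x', 0) = 1" by (rule S1)
    have "chi (x, 0) = chi (emult eps (x / x', 0) (x', 0))" using x' by (simp add: emult_real2)
    also have "\<dots> = chi (x / x', 0) * chi (x', 0)" using x x' by (intro chimul) auto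
    finally show ?thesis using c1 by simp
  qed
  define Hs where "Hs = {emult eps (x, 0) u | x u. x \<noteq> 0 \<and> u \<in> U}"
  define f where "f a = (SOME c. \<exists>x u. x \<noteq> 0 \<and> u \<in> U \<and> a = emult eps (x, 0) u \<and> c = chi (x, 0))" for a
  have fval: "f (emult eps (x, 0) u) = chi (x, 0)" if x: "x \<noteq> 0" and u: "u \<in> U" for x u
  proof -
    have "\<exists>c. \<exists>x' u'. x' \<noteq> 0 \<and> u' \<in> U \<and> emult eps (x, 0) u = emult eps (x', 0) u' \<and> c = chi (x', 0)"
      using x u by blast
    then have "\<exists>x' u'. x' \<noteq> 0 \<and> u' \<in> U \<and> emult eps (x, 0) u = emult eps (x', 0) u' \<and> f (emult eps (x, 0) u) = chi (x', 0)"
      unfolding f_def by (rule someI_ex)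
    then show ?thesis using wd[OF x _ u] by metis
  qed
  have Hsc: "emult eps (x, 0) u \<in> carrier (GE eps)" if "x \<noteq> 0" "u \<in> U" for x u
    using emult_nz[OF nsq, of "(x,0)" u] that Unz by auto
  have Hsub: "subgroup Hs (GE eps)"
  proof (rule group.subgroupI[OF GE_group[OF nl two0 v2 veps nsq]])
    show "Hs \<subseteq> carrier (GE eps)" unfolding Hs_def using Hsc by blast
  next
    have o: "(1, 0) \<in> U" using subgroup.one_closed[OF Usub] by simp
    have "(1::'a) \<noteq> 0" by simp
    then have "emult eps (1, 0) (1, 0) \<in> Hs" unfolding Hs_def using o by blast
    then show "Hs \<noteq> {}" by blast
  next
    fix a assume "a \<in> Hs"
    then obtain x u where x: "x \<noteq> 0" and u: "u \<in> U" and a: "a = emult eps (x, 0) u" unfolding Hs_def by blast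
    have uc: "u \<in> carrier (GE eps)" using Unz u by auto
    have "inv\<^bsub>GE eps\<^esub> a = inv\<^bsub>GE eps\<^esub> (x, 0) \<otimes>\<^bsub>GE eps\<^esub> inv\<^bsub>GE eps\<^esub> u"
      unfolding a using G.inv_mult[OF realc[OF x] uc] by simp
    moreover have "inv\<^bsub>GE eps\<^esub> (x, 0) = (inverse x, 0)"
      using GE_inv[OF nsq, of "(x,0)"] x unfolding einv_def enorm_def by (simp add: field_simps)
    ultimately have "inv\<^bsub>GE eps\<^esub> a = emult eps (inverse x, 0) (inv\<^bsub>GE eps\<^esub> u)" by simp
    moreover have "inv\<^bsub>GE eps\<^esub> u \<in> U" by (rule subgroup.m_inv_closed[OF Usub u])
    moreover have "inverse x \<noteq> 0" using x by simp
    ultimately show "inv\<^bsub>GE eps\<^esub> a \<in> Hs" unfolding Hs_def by blast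
  next
    fix a b assume "a \<in> Hs" "b \<in> Hs"
    then obtain x u y w where x: "x \<noteq> 0" and u: "u \<in> U" and a: "a = emult eps (x, 0) u"
      and y: "y \<noteq> 0" and w: "w \<in> U" and b: "b = emult eps (y, 0) w" unfolding Hs_def by blast
    have "a \<otimes>\<^bsub>GE eps\<^esub> b = emult eps (emult eps (x, 0) (y, 0)) (emult eps u w)"
      unfolding a b GE_simps by (rule emult_4)
    also have "\<dots> = emult eps (x * y, 0) (u \<otimes>\<^bsub>GE eps\<^esub> w)" by (simp add: emult_real2)
    finally have "a \<otimes>\<^bsub>GE eps\<^esub> b = emult eps (x * y, 0) (u \<otimes>\<^bsub>GE eps\<^esub> w)" .
    moreover have "x * y \<noteq> 0" using x y by simp
    ultimately show "a \<otimes>\<^bsub>GE eps\<^esub> b \<in> Hs" unfolding Hs_def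
      using subgroup.m_closed[OF Usub u w] by blast
  qed
  have Hform: "\<exists>x u. x \<noteq> 0 \<and> u \<in> U \<and> a = emult eps (x, 0) u" if "a \<in> Hs" for a
    using that unfolding Hs_def by blast
  have fm: "f (a \<otimes>\<^bsub>GE eps\<^esub> b) = f a * f b" if ha: "a \<in> Hs" and hb: "b \<in> Hs" for a b
  proof -
    obtain x u where x: "x \<noteq> 0" and u: "u \<in> U" and a: "a = emult eps (x, 0) u" using Hform[OF ha] by blast
    obtain y w where y: "y \<noteq> 0" and w: "w \<in> U" and b: "b = emult eps (y, 0) w" using Hform[OF hb] by blast
    have "a \<otimes>\<^bsub>GE eps\<^esub> b = emult eps (emult eps (x, 0) (y, 0)) (emult eps u w)"
      unfolding a b GE_simps by (rule emult_4)
    also have "\<dots> = emult eps (x * y, 0) (emult eps u w)" by (simp add: emult_real2)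
    finally have "a \<otimes>\<^bsub>GE eps\<^esub> b = emult eps (x * y, 0) (emult eps u w)" .
    moreover have "emult eps u w \<in> U" using subgroup.m_closed[OF Usub u w] by simp
    ultimately have "f (a \<otimes>\<^bsub>GE eps\<^esub> b) = chi (x * y, 0)" using fval x y by simp
    also have "\<dots> = chi (x, 0) * chi (y, 0)" using chimul[of "(x,0)" "(y,0)"] x y by (simp add: emult_real2)
    finally show ?thesis using fval x u a y w b by simp
  qed
  have fnz: "f a \<noteq> 0" if ha: "a \<in> Hs" for a
  proof -
    obtain x u where x: "x \<noteq> 0" and u: "u \<in> U" and a: "a = emult eps (x, 0) u" using Hform[OF ha] by blast
    show ?thesis using fval[OF x u] chinz[of "(x,0)"] x a by simp
  qed
  obtain F where Fm: "\<forall>x\<in>carrier (GE eps). \<forall>y\<in>carrier (GE eps). F (x \<otimes>\<^bsub>GE eps\<^esub> y) = F x * F y"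
    and Fnz: "\<forall>x\<in>carrier (GE eps). F x \<noteq> 0" and FH: "\<forall>x\<in>Hs. F x = f x"
    using G.char_extend[OF Hsub fm fnz] by blast
  have Fmul: "F (emult eps a b) = F a * F b" if ab: "a \<noteq> (0,0)" "b \<noteq> (0,0)" for a b
  proof -
    have ac: "a \<in> carrier (GE eps)" "b \<in> carrier (GE eps)" using ab by auto
    have "F (a \<otimes>\<^bsub>GE eps\<^esub> b) = F a * F b" using Fm ac by blast
    then show ?thesis by simp
  qed
  have Fnz': "F a \<noteq> 0" if an: "a \<noteq> (0,0)" for a
  proof -
    have "a \<in> carrier (GE eps)" using an by simp
    then show ?thesis using Fnz by blast
  qed
  have Freal: "F (x, 0) = chi (x, 0)" if x: "x \<noteq> 0" for x
  proof -
    have o: "(1, 0) \<in> U" using subgroup.one_closed[OF Usub] by simp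
    have e: "emult eps (x, 0) (1, 0) = (x, 0)" by (simp add: emult_real2)
    have "emult eps (x, 0) (1, 0) \<in> Hs" unfolding Hs_def using x o by blast
    then have "F (emult eps (x, 0) (1, 0)) = f (emult eps (x, 0) (1, 0))" using FH by blast
    then show ?thesis using fval[OF x o] e by simp
  qed
  have FU: "F u = 1" if u: "u \<in> U" for u
  proof -
    have e: "emult eps (1, 0) u = u" by (cases u) (simp add: emult_real)
    have "(1::'a) \<noteq> 0" by simp
    then have "emult eps (1, 0) u \<in> Hs" unfolding Hs_def using u by blast
    then have "F (emult eps (1, 0) u) = f (emult eps (1, 0) u)" using FH by blast
    moreover have "f (emult eps (1, 0) u) = chi (1, 0)" using fval[OF _ u] by simp
    ultimately show ?thesis using chi1 e by simp
  qed
  have Sn_mem_U: "(1, 0) \<in> U" using subgroup.one_closed[OF Usub] by simp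
  have charT': "char_T eps v F"
    unfolding char_T_def
  proof (intro conjI allI impI)
    fix a b :: "'a \<times> 'a" assume "a \<noteq> (0,0)" "b \<noteq> (0,0)"
    then show "F (emult eps a b) = F a * F b" by (rule Fmul)
  next
    fix a :: "'a \<times> 'a" assume "a \<noteq> (0,0)" then show "F a \<noteq> 0" by (rule Fnz')
  next
    show "\<exists>n\<ge>1. \<forall>a\<in>Tn eps v n. F a = 1" using FU unfolding U_def by (intro exI[of _ "Suc r"]) auto
  qed
  have Sagree: "F (x, 0) = chi (x, 0)" if "x \<in> Sn v k" for x k
    using Freal Sn_nz[OF nl two0 v2 veps nsq that] by simp
  have depth: "depth_T eps v F r"
    unfolding depth_T_def has_depth_def
  proof (intro conjI)
    show "\<forall>x\<in>Tn eps v (Suc r). F x = 1" using FU unfolding U_def by auto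
  next
    show "(\<exists>x\<in>Tn eps v r. F x \<noteq> 1) \<or> r = 0 \<and> (\<forall>x\<in>Tn eps v 0. F x = 1)"
    proof (cases "\<exists>x\<in>Sn v r. chi (x, 0) \<noteq> 1")
      case True
      then obtain x where x: "x \<in> Sn v r" "chi (x, 0) \<noteq> 1" by blast
      have "(x, 0) \<in> Tn eps v r" by (rule Sn_Tn[OF nl two0 v2 veps nsq x(1)])
      moreover have "F (x, 0) \<noteq> 1" using Sagree[OF x(1)] x(2) by simp
      ultimately show ?thesis by blast
    next
      case False
      then have "r = 0" using S2 by blast
      then show ?thesis by blast
    qed
  qed
  have tdepth: "true_depth v F r"
    unfolding true_depth_def has_depth_def
  proof (intro conjI)
    show "\<forall>x\<in>Sn v (Suc r). F (x, 0) = 1" using S1 Sagree by simp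
  next
    show "(\<exists>x\<in>Sn v r. F (x, 0) \<noteq> 1) \<or> r = 0 \<and> (\<forall>x\<in>Sn v 0. F (x, 0) = 1)"
      using S2 Sagree by (metis (no_types, lifting))
  qed
  have W: "chi a / F a = chi b / F b"
    if a: "a \<noteq> (0,0)" and b: "b \<noteq> (0,0)" and eq: "tdet eps a = tdet eps b" for a b
  proof -
    obtain x where x: "x \<noteq> 0" and ax: "a = emult eps (x, 0) b"
      using tdet_eq[OF nl two0 v2 veps nsq a b eq] by blast
    have xc: "(x, 0) \<noteq> (0, 0)" using x by simp
    have "chi a = chi (x, 0) * chi b" unfolding ax by (rule chimul[OF xc b])
    moreover have "F a = chi (x, 0) * F b" unfolding ax using Fmul[OF xc b] Freal[OF x] by simp
    ultimately show ?thesis using chinz[OF xc] by simp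
  qed
  define phi where "phi z = (let a = SOME a. a \<noteq> (0,0) \<and> tdet eps a = z in chi a / F a)" for z
  have phival: "phi (tdet eps a) = chi a / F a" if a: "a \<noteq> (0,0)" for a
  proof -
    define b where "b = (SOME b. b \<noteq> (0,0) \<and> tdet eps b = tdet eps a)"
    have "\<exists>b. b \<noteq> (0,0) \<and> tdet eps b = tdet eps a" using a by blast
    then have "b \<noteq> (0,0) \<and> tdet eps b = tdet eps a" unfolding b_def by (rule someI_ex)
    then have "chi b / F b = chi a / F a" using W a by blast
    then show ?thesis unfolding phi_def b_def[symmetric] by simp
  qed
  have charE1: "char_E1 eps v phi"
    unfolding char_E1_def
  proof (intro conjI ballI)
    fix z w assume z: "z \<in> E1 eps" and w: "w \<in> E1 eps"
    obtain a where a: "a \<noteq> (0,0)" "tdet eps a = z" using tdet_surj[OF nl two0 v2 veps nsq z] by blast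
    obtain b where b: "b \<noteq> (0,0)" "tdet eps b = w" using tdet_surj[OF nl two0 v2 veps nsq w] by blast
    have ab: "emult eps a b \<noteq> (0,0)" by (rule emult_nz[OF nsq a(1) b(1)])
    have "emult eps z w = tdet eps (emult eps a b)"
      using tdet_mult[OF nl two0 v2 veps nsq a(1) b(1)] a b by simp
    then have "phi (emult eps z w) = chi (emult eps a b) / F (emult eps a b)" using phival[OF ab] by simp
    also have "\<dots> = (chi a / F a) * (chi b / F b)" using chimul[OF a(1) b(1)] Fmul[OF a(1) b(1)] by simp
    finally show "phi (emult eps z w) = phi z * phi w" using phival[OF a(1)] phival[OF b(1)] a b by simp
  next
    fix z assume z: "z \<in> E1 eps"
    obtain a where a: "a \<noteq> (0,0)" "tdet eps a = z" using tdet_surj[OF nl two0 v2 veps nsq z] by blast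
    show "phi z \<noteq> 0" using phival[OF a(1)] a chinz[OF a(1)] Fnz'[OF a(1)] by simp
  next
    define n where "n = max N (Suc r)"
    have n1: "n \<ge> 1" unfolding n_def by simp
    have "\<forall>z\<in>E1 eps \<inter> Tn eps v n. phi z = 1"
    proof
      fix z assume zz: "z \<in> E1 eps \<inter> Tn eps v n"
      obtain x y where zxy: "z = (x, y)" by (cases z)
      have xm: "x - 1 \<in> pF v n" and y: "y \<in> pF v n" using zz zxy Tn_iff[OF nl two0 v2 veps nsq n1, of z] by auto
      have xn: "x \<noteq> -1"
      proof
        assume "x = -1"
        then have m2: "-2 \<in> pF v n" using xm by simp
        have "(-2::'a) \<noteq> 0" using two0 by simp
        moreover have "v (-2) = 0" using vneg[OF nl two0] v2 by simp
        ultimately show False using m2 n1 unfolding pF_def by auto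
      qed
      obtain a where a: "a \<noteq> (0,0)" "tdet eps a = z" "fst z \<noteq> -1 \<longrightarrow> a = (1 + fst z, snd z)"
        using tdet_surj[OF nl two0 v2 veps nsq, of z] zz by blast
      have aa: "a = (1 + x, y)" using a(3) xn zxy by simp
      define u where "u = ((1 + x) / 2, y / 2)"
      have au: "a = emult eps (2, 0) u" unfolding aa u_def emult_real using two0 by simp
      have e2: "(1 + x) / 2 - 1 = (x - 1) / 2" using two0 by (simp add: field_simps)
      have "fst u - 1 \<in> pF v n" unfolding u_def fst_conv e2 by (rule pF_unit_div[OF nl two0 v2 xm])
      moreover have "snd u \<in> pF v n" unfolding u_def snd_conv by (rule pF_unit_div[OF nl two0 v2 y])
      ultimately have "fst u - 1 \<in> pF v n" "snd u \<in> pF v n" .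
      then have un: "u \<in> Tn eps v n" using Tn_iff[OF nl two0 v2 veps nsq n1, of u] by simp
      have uN: "u \<in> Tn eps v N" using Tn_mono[OF nl two0 v2 veps nsq N1, of n] un unfolding n_def by auto
      have uU: "u \<in> U" using Tn_mono[OF nl two0 v2 veps nsq _ , of "Suc r" n] un unfolding n_def U_def by auto
      have unz: "u \<noteq> (0,0)" using Unz[OF uU] .
      have tz: "(2::'a, 0::'a) \<noteq> (0, 0)" using two0 by simp
      have "chi a = chi (2, 0)" unfolding au using chimul[OF tz unz] NT[OF uN] by simp
      moreover have "F a = chi (2, 0)" unfolding au using Fmul[OF tz unz] FU[OF uU] Freal two0 by simp
      ultimately show "phi z = 1" using phival[OF a(1)] a(2) chinz[OF tz] by simp
    qed
    then show "\<exists>n\<ge>1. \<forall>a\<in>E1 eps \<inter> Tn eps v n. phi a = 1" using n1 by blast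
  qed
  show ?thesis
  proof (rule exI[of _ phi], rule exI[of _ F], intro conjI allI impI)
    show "char_E1 eps v phi" by (rule charE1)
    show "char_T eps v F" by (rule charT')
    show "minimal_depth eps v F r" unfolding minimal_depth_def using depth tdepth by simp
    fix a :: "'a \<times> 'a" assume a: "a \<noteq> (0,0)"
    show "chi a = phi (tdet eps a) * F a" using phival[OF a] Fnz'[OF a] by simp
  qed
qed

end
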